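(* Assume $\varphi'(1) > 0$. Let $q \in \mathbb{R}^m$ have positive integer entries, $n = q_1+\cdots+q_m$, and for $X = (x_1,\dots,x_m) \in (\mathbb{S}^1)^m$ let $\tilde X \in (\mathbb{S}^1)^n$ consist of $x_1$ repeated $q_1$ times, ..., $x_m$ repeated $q_m$ times. If $X$ is a critical point of $f_m(X) = \frac12\langle qq^\top, \varphi(X^\top X)\rangle$ at which the Riemannian Hessian has one zero eigenvalue and all other $m-1$ eigenvalues negative, then $\tilde X$ is a critical point of $f_n(\tilde X) = \frac12\langle \mathbf{1}_n\mathbf{1}_n^\top, \varphi(\tilde X^\top\tilde X)\rangle$ at which the Riemannian Hessian has one zero eigenvalue and all other $n-1$ eigenvalues negative.
   Context: $d=2$. $\varphi:[-1,1]\to\mathbb{R}$ is twice continuously differentiable and applied entrywise to matrices. $(\mathbb{S}^1)^k$ is the set of $2\times k$ real matrices with unit-norm columns, a Riemannian submanifold of $\mathbb{R}^{2\times k}$ with the Frobenius metric; $\langle A,B\rangle = \mathrm{Tr}(A^\top B)$; gradient and Hessian are Riemannian. *)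

theory Defs
  imports "HOL-Analysis.Derivative" "Jordan_Normal_Form.Char_Poly"
begin

text \<open>Points of S^1 are represented as pairs (a,b) in R^2 = real * real; a point of
(S^1)^k is a map X :: nat => real * real, of which only the columns X 0, ..., X (k-1)
are used.\<close>

definition ip2 :: "real \<times> real \<Rightarrow> real \<times> real \<Rightarrow> real" where
  "ip2 x y = fst x * fst y + snd x * snd y"

definition on_torus :: "nat \<Rightarrow> (nat \<Rightarrow> real \<times> real) \<Rightarrow> bool" where
  "on_torus k X \<longleftrightarrow> (\<forall>i<k. ip2 (X i) (X i) = 1)"

definition C2_on_interval :: "(real \<Rightarrow> real) \<Rightarrow> (real \<Rightarrow> real) \<Rightarrow> (real \<Rightarrow> real) \<Rightarrow> bool" where
  "C2_on_interval phi dphi ddphi \<longleftrightarrow>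
     (\<forall>x\<in>{-1..1}. (phi has_real_derivative dphi x) (at x within {-1..1})) \<and>
     (\<forall>x\<in>{-1..1}. (dphi has_real_derivative ddphi x) (at x within {-1..1})) \<and>
     continuous_on {-1..1} ddphi"

definition fobj :: "(real \<Rightarrow> real) \<Rightarrow> nat \<Rightarrow> (nat \<Rightarrow> nat \<Rightarrow> real) \<Rightarrow> (nat \<Rightarrow> real \<times> real) \<Rightarrow> real" where
  "fobj phi k W X = 1/2 * (\<Sum>i<k. \<Sum>j<k. W i j * phi (ip2 (X i) (X j)))"

text \<open>Rotation by angle t; for x in S^1 and tangent vector u = t x^perp this is
exactly the Riemannian exponential Exp_x(u) = cos t x + sin t x^perp.\<close>
definition rot :: "real \<Rightarrow> real \<times> real \<Rightarrow> real \<times> real" where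
  "rot t x = (cos t * fst x - sin t * snd x, sin t * fst x + cos t * snd x)"

text \<open>Normal coordinates of (S^1)^k at X with respect to the orthonormal tangent basis
E_i = x_i^perp e_i^T: t |-> Exp_X(sum_i t_i E_i).\<close>
definition expX :: "(nat \<Rightarrow> real \<times> real) \<Rightarrow> (nat \<Rightarrow> real) \<Rightarrow> (nat \<Rightarrow> real \<times> real)" where
  "expX X t = (\<lambda>i. rot (t i) (X i))"

text \<open>Riemannian gradient and Riemannian Hessian of f at X, expressed in the orthonormal
basis E_i: these are the gradient and Hessian of f o Exp_X in normal coordinates at 0.\<close>
definition rgrad :: "((nat \<Rightarrow> real \<times> real) \<Rightarrow> real) \<Rightarrow> (nat \<Rightarrow> real \<times> real) \<Rightarrow> nat \<Rightarrow> real" where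
  "rgrad f X i = deriv (\<lambda>s. f (expX X (\<lambda>l. if l = i then s else 0))) 0"

definition rhess :: "((nat \<Rightarrow> real \<times> real) \<Rightarrow> real) \<Rightarrow> (nat \<Rightarrow> real \<times> real) \<Rightarrow> nat \<Rightarrow> nat \<Rightarrow> real" where
  "rhess f X i j = deriv (\<lambda>s. deriv (\<lambda>r. f (expX X
       (\<lambda>l. (if l = i then s else 0) + (if l = j then r else 0)))) 0) 0"

definition riem_critical :: "nat \<Rightarrow> ((nat \<Rightarrow> real \<times> real) \<Rightarrow> real) \<Rightarrow> (nat \<Rightarrow> real \<times> real) \<Rightarrow> bool" where
  "riem_critical k f X \<longleftrightarrow> (\<forall>i<k. rgrad f X i = 0)"

definition rhess_mat :: "nat \<Rightarrow> ((nat \<Rightarrow> real \<times> real) \<Rightarrow> real) \<Rightarrow> (nat \<Rightarrow> real \<times> real) \<Rightarrow> real mat" where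
  "rhess_mat k f X = mat k k (\<lambda>(i, j). rhess f X i j)"

definition one_zero_rest_neg :: "nat \<Rightarrow> real mat \<Rightarrow> bool" where
  "one_zero_rest_neg k A \<longleftrightarrow>
     (\<exists>ls. length ls = k - 1 \<and> (\<forall>a\<in>set ls. a < 0) \<and>
        char_poly A = [:0, 1:] * prod_list (map (\<lambda>a. [:- a, 1:]) ls))"

end

theory Submission
  imports Defs "Jordan_Normal_Form.Schur_Decomposition"
begin

no_notation Inner_Product.inner (infix \<open>\<bullet>\<close> 70)
no_notation Finite_Cartesian_Product.vec_nth (infixl \<open>$\<close> 90)


lemma map_poly_of_real_prod:
  "map_poly (of_real :: real \<Rightarrow> complex) (\<Prod>e\<leftarrow>es. [:-e,1:]) = (\<Prod>e\<leftarrow>es. [:- of_real e,1:])"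
proof -
  interpret R: map_poly_comm_ring_hom "of_real :: real \<Rightarrow> complex" by unfold_locales
  show ?thesis
  proof (induct es)
    case (Cons a es)
    have "map_poly (of_real :: real \<Rightarrow> complex) (\<Prod>e\<leftarrow>a#es. [:-e,1:]) = map_poly of_real [:-a,1:] * map_poly of_real (\<Prod>e\<leftarrow>es. [:-e,1:])"
      by (simp only: list.map prod_list.Cons R.hom_mult)
    then show ?case using Cons by simp
  qed simp
qed

lemma eig_real:
  fixes A :: "real mat" and a :: complex
  assumes A: "A \<in> carrier_mat n n" and sym: "transpose_mat A = A"
    and ev: "eigenvalue (of_real_hom.mat_hom A) a"
  shows "Im a = 0"
proof -
  let ?Ac = "of_real_hom.mat_hom A :: complex mat"
  have Ac: "?Ac \<in> carrier_mat n n" using A by auto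
  obtain w where w: "w \<in> carrier_vec n" "w \<noteq> 0\<^sub>v n" "?Ac *\<^sub>v w = a \<cdot>\<^sub>v w"
    using ev Ac unfolding eigenvalue_def eigenvector_def by auto
  have row: "a * w $ i = (\<Sum>j<n. of_real (A $$ (i,j)) * w $ j)" if "i < n" for i
  proof -
    have "(?Ac *\<^sub>v w) $ i = (a \<cdot>\<^sub>v w) $ i" by (simp only: w(3))
    also have "(a \<cdot>\<^sub>v w) $ i = a * w $ i" using w that by simp
    also have "(?Ac *\<^sub>v w) $ i = (\<Sum>j<n. of_real (A $$ (i,j)) * w $ j)"
      using that A w(1) by (auto simp: scalar_prod_def lessThan_atLeast0 intro!: sum.cong)
    finally show ?thesis by simp
  qed
  define S where "S = (\<Sum>i<n. \<Sum>j<n. of_real (A $$ (i,j)) * w $ j * cnj (w $ i))"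
  define N where "N = (\<Sum>i<n. w $ i * cnj (w $ i))"
  have aN: "a * N = S" unfolding N_def S_def sum_distrib_left sum_distrib_right
  proof (rule sum.cong[OF refl])
    fix i assume "i \<in> {..<n}"
    then have "a * (w $ i * cnj (w $ i)) = (\<Sum>j<n. of_real (A $$ (i,j)) * w $ j) * cnj (w $ i)"
      using row[of i] by (simp add: mult.assoc[symmetric])
    then show "a * (w $ i * cnj (w $ i)) = (\<Sum>j<n. of_real (A $$ (i,j)) * w $ j * cnj (w $ i))"
      by (simp add: sum_distrib_right)
  qed
  have Aij: "A $$ (j,i) = A $$ (i,j)" if "i < n" "j < n" for i j
  proof -
    have "transpose_mat A $$ (i,j) = A $$ (j,i)" using A that by auto
    then show ?thesis using sym by simp
  qed
  have "cnj S = (\<Sum>i<n. \<Sum>j<n. of_real (A $$ (i,j)) * cnj (w $ j) * w $ i)"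
    unfolding S_def by simp
  also have "\<dots> = (\<Sum>j<n. \<Sum>i<n. of_real (A $$ (i,j)) * cnj (w $ j) * w $ i)"
    by (rule sum.swap)
  also have "\<dots> = S" unfolding S_def
    by (intro sum.cong refl) (auto simp: Aij mult_ac)
  finally have cS: "cnj S = S" .
  have Nr: "N = of_real (\<Sum>i<n. (cmod (w $ i))^2)"
    unfolding N_def by (simp add: of_real_sum complex_norm_square[symmetric])
  have "\<exists>i<n. w $ i \<noteq> 0"
  proof (rule ccontr)
    assume "\<not> ?thesis"
    then have "w = 0\<^sub>v n" using w(1) by (intro eq_vecI) auto
    then show False using w(2) by simp
  qed
  then obtain i where i: "i < n" "w $ i \<noteq> 0" by auto
  have "(\<Sum>i<n. (cmod (w $ i))^2) > 0"
    by (rule sum_pos2[of _ i]) (use i in auto)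
  then have N0: "N \<noteq> 0" unfolding Nr by (metis of_real_eq_0_iff order_less_irrefl)
  have cN: "cnj N = N" unfolding Nr by simp
  have "cnj a * N = a * N" using aN cS cN by (metis complex_cnj_mult)
  then have "cnj a = a" using N0 by simp
  then show ?thesis by (metis Reals_cnj_iff complex_is_Real_iff)
qed

lemma sym_split:
  fixes A :: "real mat"
  assumes A: "A \<in> carrier_mat n n" and sym: "transpose_mat A = A"
  shows "\<exists>es. char_poly A = (\<Prod>e\<leftarrow>es. [:-e,1:])"
proof -
  let ?Ac = "of_real_hom.mat_hom A :: complex mat"
  have Ac: "?Ac \<in> carrier_mat n n" using A by auto
  obtain as where as: "char_poly ?Ac = (\<Prod>a\<leftarrow>as. [:- a, 1:])"
    using char_poly_factorized[OF Ac] by auto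
  have real: "a = of_real (Re a)" if "a \<in> set as" for a
  proof -
    have "poly (char_poly ?Ac) a = 0" unfolding as using that
      by (auto simp: poly_prod_list prod_list_zero_iff)
    then have "eigenvalue ?Ac a" using eigenvalue_root_char_poly[OF Ac] by simp
    then have "Im a = 0" by (rule eig_real[OF A sym])
    then show ?thesis by (simp add: complex_eq_iff)
  qed
  have "(\<Prod>a\<leftarrow>as. [:- a, 1:]) = (\<Prod>e\<leftarrow>map Re as. [:- of_real e, 1:])"
    using real by (induct as) auto
  then have "map_poly of_real (char_poly A) = map_poly (of_real :: real \<Rightarrow> complex) (\<Prod>e\<leftarrow>map Re as. [:-e,1:])"
    unfolding map_poly_of_real_prod of_real_hom.char_poly_hom[OF A, symmetric] as by simp
  then have "char_poly A = (\<Prod>e\<leftarrow>map Re as. [:-e,1:])"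
    by (intro poly_eqI) (metis of_real_hom.coeff_map_poly_hom of_real_eq_iff)
  then show ?thesis by blast
qed

definition dmat :: "real list \<Rightarrow> real mat" where
  "dmat es = Matrix.mat (length es) (length es) (\<lambda>(i,j). if i = j then es ! i else 0)"

definition orth_mat :: "nat \<Rightarrow> real mat \<Rightarrow> bool" where
  "orth_mat n P \<longleftrightarrow> P \<in> carrier_mat n n \<and> transpose_mat P * P = 1\<^sub>m n \<and> P * transpose_mat P = 1\<^sub>m n"

lemma orthonormal_basis_with_hd:
  fixes v :: "real Matrix.vec"
  assumes v: "v \<in> carrier_vec n" and vv: "v \<bullet> v = 1"
  shows "\<exists>us. set us \<subseteq> carrier_vec n \<and> length us = n \<and> hd us = v \<and>
     (\<forall>i<n. \<forall>j<n. us ! i \<bullet> us ! j = (if i = j then 1 else 0))"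
proof -
  have v0: "v \<noteq> 0\<^sub>v n" using vv v by auto
  interpret cof_vec_space n "TYPE(real)" .
  define b where "b = basis_completion v"
  from basis_completion[OF v v0, folded b_def]
  have dist_b: "distinct b" 
    and indep: "\<not> lin_dep (set b)" and b: "set b \<subseteq> carrier_vec n" and hdb: "hd b = v" 
    and len_b: "length b = n" by auto
  have n: "n \<noteq> 0" using v0 v by (cases n) auto
  from hdb len_b n obtain vs where bv: "b = v # vs" by (cases b, auto)
  define ws where "ws = gram_schmidt n b"
  from gram_schmidt_result[OF b dist_b indep refl, folded ws_def]
  have ws: "set ws \<subseteq> carrier_vec n" "corthogonal ws" "length ws = n" 
    by (auto simp: len_b)
  from gram_schmidt_hd[OF v, of vs, folded bv] have hdws: "hd ws = v" unfolding ws_def .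
  define us where "us = map (\<lambda>w. (1 / sqrt (w \<bullet> w)) \<cdot>\<^sub>v w) ws"
  have wsi: "ws ! i \<in> carrier_vec n" if "i < n" for i using ws that by auto
  have wpos: "ws ! i \<bullet> ws ! i > 0" if "i < n" for i
  proof -
    have "ws ! i \<bullet>c ws ! i \<noteq> 0" using corthogonalD[OF ws(2), of i i] ws(3) that by auto
    then have "ws ! i \<noteq> 0\<^sub>v n" using wsi[OF that] by auto
    then show ?thesis using conjugate_square_greater_0_vec[OF wsi[OF that]] by simp
  qed
  have worth: "ws ! i \<bullet> ws ! j = 0" if "i < n" "j < n" "i \<noteq> j" for i j
    using corthogonalD[OF ws(2), of i j] ws(3) that by simp
  have "us ! i \<bullet> us ! j = (if i = j then 1 else 0)" if "i < n" "j < n" for i j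
  proof -
    have "us ! i \<bullet> us ! j = (1 / sqrt (ws!i \<bullet> ws!i)) * (1 / sqrt (ws!j \<bullet> ws!j)) * (ws!i \<bullet> ws!j)"
      unfolding us_def using that ws wsi[OF that(1)] wsi[OF that(2)] by simp
    also have "\<dots> = (if i = j then 1 else 0)"
      using worth[OF that] wpos[OF that(1)] 
      by (auto simp: field_simps real_sqrt_mult[symmetric])
    finally show ?thesis .
  qed
  moreover have "set us \<subseteq> carrier_vec n" unfolding us_def using ws by auto
  moreover have "length us = n" unfolding us_def using ws by auto
  moreover have "hd us = v" unfolding us_def using ws n hdws vv 
    by (cases ws) auto
  ultimately show ?thesis by blast
qed

lemma orth_cols:
  fixes us :: "real Matrix.vec list"
  assumes us: "set us \<subseteq> carrier_vec n" "length us = n"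
    and on: "\<forall>i<n. \<forall>j<n. us ! i \<bullet> us ! j = (if i = j then 1 else 0)"
  shows "orth_mat n (mat_of_cols n us)"
proof -
  let ?U = "mat_of_cols n us"
  have U: "?U \<in> carrier_mat n n" using us by auto
  have "transpose_mat ?U * ?U = 1\<^sub>m n"
  proof (rule eq_matI)
    fix i j assume "i < dim_row (1\<^sub>m n :: real mat)" "j < dim_col (1\<^sub>m n :: real mat)"
    then have ij: "i < n" "j < n" by auto
    have "(transpose_mat ?U * ?U) $$ (i,j) = col ?U i \<bullet> col ?U j"
      using ij U by (subst index_mult_mat(1)) (auto simp: carrier_matD)
    also have "\<dots> = us ! i \<bullet> us ! j"
    proof -
      have "us ! i \<in> carrier_vec n" "us ! j \<in> carrier_vec n" using ij us nth_mem[of i us] nth_mem[of j us] by auto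
      then have "col ?U i = us ! i" "col ?U j = us ! j" using col_mat_of_cols[of i us n] col_mat_of_cols[of j us n] ij us by auto
      then show ?thesis by simp
    qed
    finally show "(transpose_mat ?U * ?U) $$ (i,j) = 1\<^sub>m n $$ (i,j)" using on ij by auto
  qed (use U in auto)
  moreover then have "?U * transpose_mat ?U = 1\<^sub>m n"
    using mat_mult_left_right_inverse[of "transpose_mat ?U" n ?U] U by auto
  ultimately show ?thesis unfolding orth_mat_def using U by auto
qed

lemma dmat_cons:
  "four_block_mat (Matrix.mat 1 1 (\<lambda>_. e)) (0\<^sub>m 1 (length es)) (0\<^sub>m (length es) 1) (dmat es) = dmat (e # es)"
  unfolding dmat_def by (rule eq_matI) (auto simp: nth_Cons')

lemma spectral_split:
  fixes A :: "real mat"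
  assumes "A \<in> carrier_mat n n" "transpose_mat A = A" "char_poly A = (\<Prod>e\<leftarrow>es. [:-e,1:])"
  shows "\<exists>P. orth_mat n P \<and> transpose_mat P * A * P = dmat es"
  using assms
proof (induct es arbitrary: n A)
  case Nil
  then have n: "n = 0" using degree_monic_char_poly[of A n] by auto
  have "transpose_mat (1\<^sub>m 0) * A * 1\<^sub>m 0 = dmat []"
    using Nil(1) n unfolding dmat_def by (intro eq_matI) auto
  moreover have "orth_mat 0 (1\<^sub>m 0)" unfolding orth_mat_def by auto
  ultimately show ?case using n by blast
next
  case (Cons e es n A)
  note A = Cons(2) and symA = Cons(3) and cp = Cons(4)
  have cp': "char_poly A = [: -e, 1 :] * (\<Prod>e\<leftarrow>es. [:- e, 1:])" using cp by simp
  have mon: "monic (\<Prod>e\<leftarrow> es. [:- e, 1:])" by (rule monic_prod_list, auto)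
  have deg: "degree (char_poly A) = Suc (degree (\<Prod>e\<leftarrow> es. [:- e, 1:]))" unfolding cp'
    by (subst degree_mult_eq, insert mon, auto)
  with degree_monic_char_poly[OF A] have n: "n \<noteq> 0" by auto
  have ev: "eigenvalue A e" 
    unfolding eigenvalue_root_char_poly[OF A] cp' by simp
  define v0 where "v0 = find_eigenvector A e"
  from find_eigenvector[OF A ev] have "eigenvector A v0 e" unfolding v0_def .
  then have v0: "v0 \<in> carrier_vec n" "v0 \<noteq> 0\<^sub>v n" "A *\<^sub>v v0 = e \<cdot>\<^sub>v v0"
    unfolding eigenvector_def using A by auto
  have v0pos: "v0 \<bullet> v0 > 0" using conjugate_square_greater_0_vec[OF v0(1)] v0(2) by simp
  define v where "v = (1 / sqrt (v0 \<bullet> v0)) \<cdot>\<^sub>v v0"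
  have v: "v \<in> carrier_vec n" unfolding v_def using v0 by auto
  have vv: "v \<bullet> v = 1" unfolding v_def using v0 v0pos by (simp add: field_simps)
  have vne: "v \<noteq> 0\<^sub>v n" using vv v by auto
  have eig: "A *\<^sub>v v = e \<cdot>\<^sub>v v" unfolding v_def
    using mult_mat_vec[OF A v0(1)] v0(3) by (auto simp: smult_smult_assoc mult.commute)
  obtain us where us: "set us \<subseteq> carrier_vec n" "length us = n" "hd us = v"
    and on: "\<forall>i<n. \<forall>j<n. us ! i \<bullet> us ! j = (if i = j then 1 else 0)"
    using orthonormal_basis_with_hd[OF v vv] by blast
  define U where "U = mat_of_cols n us"
  have oU: "orth_mat n U" unfolding U_def by (rule orth_cols[OF us(1,2) on])
  then have U: "U \<in> carrier_mat n n" and UtU: "transpose_mat U * U = 1\<^sub>m n"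
    and UUt: "U * transpose_mat U = 1\<^sub>m n" unfolding orth_mat_def by auto
  have corth: "corthogonal us"
    using on us(2) by (intro corthogonalI) simp
  have vinv: "map vec_inv us = us"
  proof (rule nth_equalityI)
    fix i assume "i < length (map vec_inv us)"
    then have i: "i < n" using us by auto
    then have "us ! i \<bullet> us ! i = 1" using on by auto
    then show "map vec_inv us ! i = us ! i" using i us unfolding vec_inv_def by simp
  qed simp
  have Uinv: "corthogonal_inv U = transpose_mat U"
    unfolding corthogonal_inv_def U_def using us vinv by (simp add: transpose_mat_of_cols)
  define A' where "A' = transpose_mat U * A * U"
  have A': "A' \<in> carrier_mat n n" unfolding A'_def using U A by auto
  have col0: "col A' 0 = Matrix.vec n (\<lambda> i. if i = 0 then e else 0)"
    using corthogonal_col_ev_0[OF A v vne eig n us(3) us(1) corth us(2)]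
    unfolding A'_def Uinv[unfolded U_def] U_def .
  have symA': "transpose_mat A' = A'"
  proof -
    have "transpose_mat A' = transpose_mat (transpose_mat U * (A * U))"
      unfolding A'_def using U A by simp
    also have "\<dots> = transpose_mat (A * U) * U"
      using U A by (subst transpose_mult[of _ n n]) auto
    also have "\<dots> = transpose_mat U * A * U"
      using U A symA by (subst transpose_mult[of _ n n]) auto
    finally show ?thesis unfolding A'_def .
  qed
  define A3 where "A3 = Matrix.mat (n-1) (n-1) (\<lambda>(i,j). A' $$ (Suc i, Suc j))"
  have A3: "A3 \<in> carrier_mat (n-1) (n-1)" unfolding A3_def by auto
  have A'0: "A' $$ (i, 0) = (if i = 0 then e else 0)" if "i < n" for i
    using arg_cong[OF col0, of "\<lambda>w. w $ i"] A' that n by auto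
  have A'0': "A' $$ (0, j) = (if j = 0 then e else 0)" if "j < n" for j
  proof -
    have "A' $$ (0, j) = transpose_mat A' $$ (j, 0)" using A' that n by auto
    then show ?thesis using symA' A'0[OF that] by simp
  qed
  have A'block: "A' = four_block_mat (Matrix.mat 1 1 (\<lambda>_. e)) (0\<^sub>m 1 (n-1)) (0\<^sub>m (n-1) 1) A3"
    by (rule eq_matI) (use A' n A'0 A'0' in \<open>auto simp: A3_def\<close>)
  have symA3: "transpose_mat A3 = A3"
  proof (rule eq_matI)
    fix i j assume "i < dim_row A3" "j < dim_col A3"
    then have ij: "i < n - 1" "j < n - 1" using A3 by auto
    have "A' $$ (Suc j, Suc i) = transpose_mat A' $$ (Suc i, Suc j)" using ij A' by auto
    then show "transpose_mat A3 $$ (i, j) = A3 $$ (i, j)"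
      using ij symA' unfolding A3_def by auto
  qed (use A3 in auto)
  have sim: "similar_mat A' A"
    unfolding similar_mat_def
    by (rule exI[of _ "transpose_mat U"], rule exI[of _ U], rule similar_mat_witI[of _ _ n])
       (use U A A' UtU UUt in \<open>auto simp: A'_def\<close>)
  have "char_poly A' = char_poly (Matrix.mat 1 1 (\<lambda>_. e)) * char_poly A3"
    unfolding A'block by (rule char_poly_four_block_zeros_col) (use A3 in auto)
  also have "char_poly (Matrix.mat 1 1 (\<lambda>_. e)) = [: -e,1 :]"
    by (simp add: char_poly_defs det_def sign_def)
  finally have "[: -e,1 :] * (\<Prod>e\<leftarrow>es. [:- e, 1:]) = [: -e,1 :] * char_poly A3"
    using char_poly_similar[OF sim] cp' by simp
  then have cp3: "char_poly A3 = (\<Prod>e\<leftarrow>es. [:- e, 1:])"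
    by (metis mult_cancel_left pCons_eq_0_iff zero_neq_one)
  from Cons(1)[OF A3 symA3 cp3] obtain P3 where oP3: "orth_mat (n-1) P3"
    and D3: "transpose_mat P3 * A3 * P3 = dmat es" by blast
  from oP3 have P3: "P3 \<in> carrier_mat (n-1) (n-1)" and P3tP3: "transpose_mat P3 * P3 = 1\<^sub>m (n-1)"
    and P3P3t: "P3 * transpose_mat P3 = 1\<^sub>m (n-1)" unfolding orth_mat_def by auto
  have len: "length es = n - 1" using degree_monic_char_poly[OF A3] cp3 
    by (simp add: degree_linear_factors)
  define B where "B = four_block_mat (1\<^sub>m 1) (0\<^sub>m 1 (n-1)) (0\<^sub>m (n-1) 1) P3"
  have nn: "1 + (n - 1) = n" using n by simp
  have B: "B \<in> carrier_mat n n" unfolding B_def using P3 nn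
    by (metis four_block_carrier_mat one_carrier_mat)
  have Bt: "transpose_mat B = four_block_mat (1\<^sub>m 1) (0\<^sub>m 1 (n-1)) (0\<^sub>m (n-1) 1) (transpose_mat P3)"
    unfolding B_def using P3 by (subst transpose_four_block_mat) auto
  have P3t: "transpose_mat P3 \<in> carrier_mat (n-1) (n-1)" using P3 by auto
  note o1 = one_carrier_mat[of 1] and z1 = zero_carrier_mat[of 1 "n-1"] and z2 = zero_carrier_mat[of "n-1" 1]
  have BtB: "transpose_mat B * B = 1\<^sub>m n"
    unfolding Bt unfolding B_def using P3 P3tP3 nn
    by (subst mult_four_block_mat[OF o1 z1 z2 P3t o1 z1 z2 P3]) auto
  have BBt: "B * transpose_mat B = 1\<^sub>m n"
    unfolding Bt unfolding B_def using P3 P3P3t nn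
    by (subst mult_four_block_mat[OF o1 z1 z2 P3 o1 z1 z2 P3t]) auto
  have BtA'B: "transpose_mat B * A' * B = dmat (e # es)"
  proof -
    have "transpose_mat B * A' = four_block_mat (Matrix.mat 1 1 (\<lambda>_. e)) (0\<^sub>m 1 (n-1)) (0\<^sub>m (n-1) 1) (transpose_mat P3 * A3)"
      unfolding Bt A'block using P3 A3
      by (subst mult_four_block_mat[OF o1 z1 z2 P3t mat_carrier z1 z2 A3]) auto
    also have "\<dots> * B = four_block_mat (Matrix.mat 1 1 (\<lambda>_. e)) (0\<^sub>m 1 (n-1)) (0\<^sub>m (n-1) 1) (transpose_mat P3 * A3 * P3)"
      unfolding B_def using P3 A3
      by (subst mult_four_block_mat[OF mat_carrier z1 z2 _ o1 z1 z2 P3]) (use P3t A3 in auto)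
    finally show ?thesis using D3 len dmat_cons[of e es] by simp
  qed
  define P where "P = U * B"
  have P: "P \<in> carrier_mat n n" unfolding P_def using U B by auto
  have Pt: "transpose_mat P = transpose_mat B * transpose_mat U"
    unfolding P_def using U B by (simp add: transpose_mult[of _ n n])
  have "transpose_mat P * P = 1\<^sub>m n"
  proof -
    have "transpose_mat P * P = transpose_mat B * (transpose_mat U * U) * B"
      unfolding Pt unfolding P_def using U B by (simp add: assoc_mult_mat[of _ n n _ n _ n])
    then show ?thesis using UtU BtB B by simp
  qed
  moreover have "P * transpose_mat P = 1\<^sub>m n"
  proof -
    have "P * transpose_mat P = U * (B * transpose_mat B) * transpose_mat U"
      unfolding Pt unfolding P_def using U B by (simp add: assoc_mult_mat[of _ n n _ n _ n])
    then show ?thesis using UUt BBt U by simp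
  qed
  moreover have "transpose_mat P * A * P = dmat (e # es)"
  proof -
    have "transpose_mat P * A * P = transpose_mat B * A' * B"
      unfolding Pt unfolding P_def A'_def using U B A by (simp add: assoc_mult_mat[of _ n n _ n _ n])
    then show ?thesis using BtA'B by simp
  qed
  ultimately show ?case using P unfolding orth_mat_def by blast
qed


definition qf :: "nat \<Rightarrow> real mat \<Rightarrow> (nat \<Rightarrow> real) \<Rightarrow> real" where
  "qf n M x = (\<Sum>i<n. \<Sum>j<n. x i * M $$ (i,j) * x j)"

lemma spectral_entries:
  assumes M: "M \<in> carrier_mat n n" and oP: "orth_mat n P" and D: "transpose_mat P * M * P = dmat es"
    and len: "length es = n" and ij: "i < n" "j < n"
  shows "M $$ (i,j) = (\<Sum>k<n. P $$ (i,k) * es ! k * P $$ (j,k))"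
proof -
  from oP have P: "P \<in> carrier_mat n n" and PtP: "transpose_mat P * P = 1\<^sub>m n"
    and PPt: "P * transpose_mat P = 1\<^sub>m n" unfolding orth_mat_def by auto
  have Dc: "dmat es \<in> carrier_mat n n" unfolding dmat_def using len by auto
  have "P * dmat es * transpose_mat P = P * transpose_mat P * M * (P * transpose_mat P)"
    unfolding D[symmetric] using P M by (simp add: assoc_mult_mat[of _ n n _ n _ n])
  also have "\<dots> = M" using PPt M by simp
  finally have M': "M = P * dmat es * transpose_mat P" by simp
  have PD: "(P * dmat es) $$ (i,l) = P $$ (i,l) * es ! l" if "i < n" "l < n" for i l
  proof -
    have "(P * dmat es) $$ (i,l) = (\<Sum>k\<in>{0..<n}. P $$ (i,k) * (if k = l then es ! k else 0))"
      using that P len by (simp add: scalar_prod_def dmat_def)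
    also have "\<dots> = P $$ (i,l) * es ! l"
      by (simp add: if_distrib[of "\<lambda>t. _ * t"] sum.delta that cong: if_cong)
    finally show ?thesis .
  qed
  have "M $$ (i,j) = (\<Sum>k\<in>{0..<n}. (P * dmat es) $$ (i,k) * P $$ (j,k))"
    unfolding M' using ij P len Dc by (simp add: scalar_prod_def del: assoc_mult_mat)
  also have "\<dots> = (\<Sum>k<n. P $$ (i,k) * es ! k * P $$ (j,k))"
    using PD ij by (simp add: lessThan_atLeast0)
  finally show ?thesis .
qed

lemma qf_spectral:
  assumes M: "M \<in> carrier_mat n n" and oP: "orth_mat n P" and D: "transpose_mat P * M * P = dmat es"
    and len: "length es = n"
  shows "qf n M x = (\<Sum>k<n. es ! k * (\<Sum>i<n. P $$ (i,k) * x i)^2)"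
proof -
  have "qf n M x = (\<Sum>i<n. \<Sum>j<n. \<Sum>k<n. x i * (P $$ (i,k) * es ! k * P $$ (j,k)) * x j)"
    unfolding qf_def using spectral_entries[OF M oP D len]
    by (simp add: sum_distrib_left sum_distrib_right)
  also have "\<dots> = (\<Sum>k<n. \<Sum>i<n. \<Sum>j<n. es ! k * ((P $$ (i,k) * x i) * (P $$ (j,k) * x j)))"
    by (subst sum.swap, subst (2) sum.swap) (simp add: mult_ac)
  also have "\<dots> = (\<Sum>k<n. es ! k * (\<Sum>i<n. P $$ (i,k) * x i)^2)"
    apply (simp add: power2_eq_square sum_distrib_left sum_distrib_right sum_product)
    apply (rule sum.cong[OF refl])
    by (rule sum.swap)
  finally show ?thesis .
qed


lemma orth_cols_sum:
  assumes oP: "orth_mat n P" and kl: "k < n" "l < n"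
  shows "(\<Sum>i<n. P $$ (i,k) * P $$ (i,l)) = (if k = l then 1 else 0)"
proof -
  from oP have P: "P \<in> carrier_mat n n" and PtP: "transpose_mat P * P = 1\<^sub>m n"
    unfolding orth_mat_def by auto
  have "(transpose_mat P * P) $$ (k,l) = (\<Sum>i<n. P $$ (i,k) * P $$ (i,l))"
    using P kl by (simp add: scalar_prod_def lessThan_atLeast0)
  then show ?thesis using PtP kl by simp
qed

lemma orth_rows_sum:
  assumes oP: "orth_mat n P" and ij: "i < n" "j < n"
  shows "(\<Sum>k<n. P $$ (i,k) * P $$ (j,k)) = (if i = j then 1 else 0)"
proof -
  from oP have P: "P \<in> carrier_mat n n" and PPt: "P * transpose_mat P = 1\<^sub>m n"
    unfolding orth_mat_def by auto
  have "(P * transpose_mat P) $$ (i,j) = (\<Sum>k<n. P $$ (i,k) * P $$ (j,k))"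
    using P ij by (simp add: scalar_prod_def lessThan_atLeast0)
  then show ?thesis using PPt ij by simp
qed

lemma orth_recon:
  assumes oP: "orth_mat n P" and i: "i < n"
  shows "(\<Sum>k<n. P $$ (i,k) * (\<Sum>j<n. P $$ (j,k) * x j)) = x i"
proof -
  have "(\<Sum>k<n. P $$ (i,k) * (\<Sum>j<n. P $$ (j,k) * x j)) = (\<Sum>k<n. \<Sum>j<n. P $$ (i,k) * P $$ (j,k) * x j)"
    by (simp add: sum_distrib_left mult.assoc)
  also have "\<dots> = (\<Sum>j<n. \<Sum>k<n. P $$ (i,k) * P $$ (j,k) * x j)" by (rule sum.swap)
  also have "\<dots> = (\<Sum>j<n. (\<Sum>k<n. P $$ (i,k) * P $$ (j,k)) * x j)" by (simp add: sum_distrib_right)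
  also have "\<dots> = (\<Sum>j<n. if i = j then x j else 0)"
    using orth_rows_sum[OF oP i] by (intro sum.cong) auto
  also have "\<dots> = x i" using i by (simp add: sum.delta)
  finally show ?thesis .
qed

lemma char_to_qf:
  assumes M: "M \<in> carrier_mat n n" and sym: "transpose_mat M = M"
    and h: "\<exists>ls. length ls = n - 1 \<and> (\<forall>a\<in>set ls. a < 0) \<and>
        char_poly M = [:0, 1:] * prod_list (map (\<lambda>a. [:- a, 1:]) ls)"
  shows "(\<forall>x. qf n M x \<le> 0) \<and> (\<exists>z. \<forall>x. qf n M x = 0 \<longrightarrow> (\<exists>c. \<forall>i<n. x i = c * z i))"
proof -
  obtain ls where neg: "\<forall>a\<in>set ls. a < 0" and cp: "char_poly M = [:0, 1:] * prod_list (map (\<lambda>a. [:- a, 1:]) ls)"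
    using h by blast
  define es where "es = 0 # ls"
  have cp': "char_poly M = (\<Prod>e\<leftarrow>es. [:-e,1:])" unfolding es_def cp by simp
  have len: "length es = n" using degree_monic_char_poly[OF M] cp'
    by (simp add: degree_linear_factors)

  obtain P where oP: "orth_mat n P" and D: "transpose_mat P * M * P = dmat es"
    using spectral_split[OF M sym cp'] by blast
  have es0: "es ! 0 = 0" unfolding es_def by simp
  have esk: "es ! k < 0" if "0 < k" "k < n" for k
  proof -
    have "es ! k = ls ! (k - 1)" unfolding es_def using that by (cases k) auto
    moreover have "k - 1 < length ls" using len that unfolding es_def by auto
    ultimately show ?thesis using neg nth_mem by auto
  qed
  have esle: "es ! k \<le> 0" if "k < n" for k
    using es0 esk[of k] that by (cases "k = 0") auto
  have Q: "qf n M x = (\<Sum>k<n. es ! k * (\<Sum>i<n. P $$ (i,k) * x i)^2)" for x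
    by (rule qf_spectral[OF M oP D len])
  have nsd: "qf n M x \<le> 0" for x
    unfolding Q by (rule sum_nonpos) (simp add: esle mult_nonpos_nonneg)
  have ker: "\<exists>c. \<forall>i<n. x i = c * P $$ (i,0)" if q0: "qf n M x = 0" for x
  proof -
    define y where "y k = (\<Sum>i<n. P $$ (i,k) * x i)" for k
    have s0: "(\<Sum>k<n. es ! k * (y k)^2) = 0" using Q[of x] q0 by (simp add: y_def)
    have s1: "(\<Sum>k<n. - (es ! k * (y k)^2)) = 0" using s0 by (simp add: sum_negf)
    have nn: "\<forall>k\<in>{..<n}. 0 \<le> - (es ! k * (y k)^2)"
    proof
      fix k assume "k \<in> {..<n}"
      then have "es ! k \<le> 0" using esle by simp
      then have "es ! k * (y k)^2 \<le> 0" by (simp add: mult_nonpos_nonneg)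
      then show "0 \<le> - (es ! k * (y k)^2)" by simp
    qed
    have z: "\<forall>k\<in>{..<n}. - (es ! k * (y k)^2) = 0"
      using sum_nonneg_eq_0_iff[of "{..<n}" "\<lambda>k. - (es ! k * (y k)^2)"] s1 nn by simp
    have yk: "y k = 0" if "0 < k" "k < n" for k
    proof -
      have "es ! k * (y k)^2 = 0" using z that by simp
      then show ?thesis using esk[OF that] by simp
    qed
    have "x i = y 0 * P $$ (i,0)" if i: "i < n" for i
    proof -
      have "x i = (\<Sum>k<n. P $$ (i,k) * y k)" using orth_recon[OF oP i, of x] unfolding y_def by simp
      also have "\<dots> = (\<Sum>k<n. if k = 0 then P $$ (i,0) * y 0 else 0)"
      proof (rule sum.cong[OF refl])
        fix k assume "k \<in> {..<n}"
        then show "P $$ (i,k) * y k = (if k = 0 then P $$ (i,0) * y 0 else 0)"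
          using yk[of k] by (cases "k = 0") auto
      qed
      also have "\<dots> = P $$ (i,0) * y 0" using i by (simp add: sum.delta)
      finally show ?thesis by (simp only: mult.commute)
    qed
    then show ?thesis by blast
  qed
  show ?thesis using nsd ker by (intro conjI allI exI[of _ "\<lambda>i. P $$ (i,0)"] impI) auto
qed


lemma prod_remove_nth:
  assumes "k < length es"
  shows "(\<Prod>e\<leftarrow>es. [:-e,1:]) = [:- (es ! k), 1:] * (\<Prod>e\<leftarrow>take k es @ drop (Suc k) es. [:-e,1:])"
proof -
  have "es = take k es @ es ! k # drop (Suc k) es" using assms by (rule id_take_nth_drop)
  then have "(\<Prod>e\<leftarrow>es. [:-e,1:]) = (\<Prod>e\<leftarrow>take k es @ es ! k # drop (Suc k) es. [:-e,1:])" by simp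
  also have "\<dots> = [:- (es ! k), 1:] * (\<Prod>e\<leftarrow>take k es @ drop (Suc k) es. [:-e,1:])"
    by (simp only: map_append prod_list.append list.map prod_list.Cons mult_ac)
  finally show ?thesis .
qed

lemma qf_to_char:
  assumes M: "M \<in> carrier_mat n n" and sym: "transpose_mat M = M"
    and nsd: "\<forall>x. qf n M x \<le> 0"
    and z: "i0 < n" "z i0 \<noteq> 0" "qf n M z = 0"
    and ker: "\<forall>x. qf n M x = 0 \<longrightarrow> (\<exists>c. \<forall>i<n. x i = c * z i)"
  shows "\<exists>ls. length ls = n - 1 \<and> (\<forall>a\<in>set ls. a < 0) \<and>
        char_poly M = [:0, 1:] * prod_list (map (\<lambda>a. [:- a, 1:]) ls)"
proof -
  obtain es where cp: "char_poly M = (\<Prod>e\<leftarrow>es. [:-e,1:])" using sym_split[OF M sym] by blast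
  have len: "length es = n" using degree_monic_char_poly[OF M] cp
    by (simp add: degree_linear_factors)
  obtain P where oP: "orth_mat n P" and D: "transpose_mat P * M * P = dmat es"
    using spectral_split[OF M sym cp] by blast
  have Q: "qf n M x = (\<Sum>k<n. es ! k * (\<Sum>i<n. P $$ (i,k) * x i)^2)" for x
    by (rule qf_spectral[OF M oP D len])
  have qcol: "qf n M (\<lambda>i. P $$ (i,k)) = es ! k" if k: "k < n" for k
  proof -
    have "qf n M (\<lambda>i. P $$ (i,k)) = (\<Sum>l<n. es ! l * (if l = k then 1 else 0)^2)"
      unfolding Q using orth_cols_sum[OF oP _ k] by (intro sum.cong refl) (simp add: mult.commute)
    also have "\<dots> = (\<Sum>l<n. if l = k then es ! k else 0)" by (intro sum.cong refl) auto
    also have "\<dots> = es ! k" using k by (simp add: sum.delta')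
    finally show ?thesis .
  qed
  have esle: "es ! k \<le> 0" if "k < n" for k using nsd qcol[OF that] by metis
  define y where "y k = (\<Sum>i<n. P $$ (i,k) * z i)" for k
  have "\<exists>k<n. y k \<noteq> 0"
  proof (rule ccontr)
    assume "\<not> ?thesis"
    then have "\<forall>k<n. y k = 0" by simp
    then have "z i0 = 0" using orth_recon[OF oP z(1), of z] unfolding y_def[symmetric] by simp
    then show False using z(2) by simp
  qed
  then obtain k0 where k0: "k0 < n" "y k0 \<noteq> 0" by blast
  have s0: "(\<Sum>k<n. es ! k * (y k)^2) = 0" using Q[of z] z(3) by (simp add: y_def)
  have s1: "(\<Sum>k<n. - (es ! k * (y k)^2)) = 0" using s0 by (simp add: sum_negf)
  have nn: "\<forall>k\<in>{..<n}. 0 \<le> - (es ! k * (y k)^2)"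
  proof
    fix k assume "k \<in> {..<n}"
    then have "es ! k \<le> 0" using esle by simp
    then have "es ! k * (y k)^2 \<le> 0" by (simp add: mult_nonpos_nonneg)
    then show "0 \<le> - (es ! k * (y k)^2)" by simp
  qed
  have zz: "\<forall>k\<in>{..<n}. - (es ! k * (y k)^2) = 0"
    using sum_nonneg_eq_0_iff[of "{..<n}" "\<lambda>k. - (es ! k * (y k)^2)"] s1 nn by simp
  have e0: "es ! k0 = 0" using bspec[OF zz, of k0] k0 by simp
  have colz: "\<exists>c. \<forall>i<n. P $$ (i,k) = c * z i" if "k < n" "es ! k = 0" for k
    using ker qcol[of k] that by simp
  have uniq: "es ! k < 0" if k: "k < n" "k \<noteq> k0" for k
  proof (rule ccontr)
    assume "\<not> es ! k < 0"
    then have ek: "es ! k = 0" using esle[OF k(1)] by simp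
    obtain a where a: "\<forall>i<n. P $$ (i,k0) = a * z i" using colz[OF k0(1) e0] by blast
    obtain b where b: "\<forall>i<n. P $$ (i,k) = b * z i" using colz[OF k(1) ek] by blast
    define S where "S = (\<Sum>i<n. z i * z i)"
    have "1 = (\<Sum>i<n. P $$ (i,k0) * P $$ (i,k0))" using orth_cols_sum[OF oP k0(1) k0(1)] by simp
    also have "\<dots> = a * a * S" unfolding S_def sum_distrib_left using a
      by (intro sum.cong refl) (simp add: mult_ac)
    finally have aS: "a * a * S = 1" by simp
    have "0 = (\<Sum>i<n. P $$ (i,k0) * P $$ (i,k))" using orth_cols_sum[OF oP k0(1) k(1)] k(2) by simp
    also have "\<dots> = a * b * S" unfolding S_def sum_distrib_left using a b
      by (intro sum.cong refl) (simp add: mult_ac)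
    finally have abS: "a * b * S = 0" by simp
    have b0: "b = 0" using aS abS by (metis mult_eq_0_iff mult.commute zero_neq_one mult.assoc)
    have "1 = (\<Sum>i<n. P $$ (i,k) * P $$ (i,k))" using orth_cols_sum[OF oP k(1) k(1)] by simp
    also have "\<dots> = 0" using b b0 by simp
    finally show False by simp
  qed
  define ls where "ls = take k0 es @ drop (Suc k0) es"
  have "length ls = n - 1" unfolding ls_def using len k0 by auto
  moreover have "\<forall>a\<in>set ls. a < 0"
  proof
    fix a assume "a \<in> set ls"
    then have "a \<in> set (take k0 es) \<or> a \<in> set (drop (Suc k0) es)" unfolding ls_def by auto
    then show "a < 0"
    proof
      assume "a \<in> set (take k0 es)"
      then obtain j where "j < length (take k0 es)" "a = take k0 es ! j" by (auto simp: in_set_conv_nth)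
      then show ?thesis using uniq[of j] len k0 by auto
    next
      assume "a \<in> set (drop (Suc k0) es)"
      then obtain j where "j < length (drop (Suc k0) es)" "a = drop (Suc k0) es ! j" by (auto simp: in_set_conv_nth)
      then show ?thesis using uniq[of "Suc k0 + j"] len k0 by auto
    qed
  qed
  moreover have "char_poly M = [:0, 1:] * prod_list (map (\<lambda>a. [:- a, 1:]) ls)"
    unfolding cp ls_def using prod_remove_nth[of k0 es] len k0 e0 by simp
  ultimately show ?thesis by blast
qed



lemma chain_within:
  assumes g: "\<forall>y\<in>{-1..1}. (g has_real_derivative g' y) (at y within {-1..1})"
    and f: "\<forall>u. f u \<in> {-1..1::real}" and fd: "(f has_real_derivative f') (at x)"
  shows "((\<lambda>u. g (f u)) has_real_derivative g' (f x) * f') (at x)"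
proof -
  have "((\<lambda>u. g (f u)) has_derivative (\<lambda>y. (*) (g' (f x)) ((*) f' y))) (at x within UNIV)"
    by (rule has_derivative_in_compose2[of "{-1..1}" g "\<lambda>y. (*) (g' y)" f UNIV x "(*) f'"])
       (use g f fd in \<open>auto simp: has_field_derivative_def\<close>)
  moreover have "(\<lambda>y. (*) (g' (f x)) ((*) f' y)) = (*) (g' (f x) * f')" by (auto simp: fun_eq_iff)
  ultimately show ?thesis by (simp add: has_field_derivative_def)
qed

definition cc :: "real \<Rightarrow> real \<Rightarrow> real \<Rightarrow> real" where
  "cc p r u = p * cos u - r * sin u"
definition G1 :: "(real \<Rightarrow> real) \<Rightarrow> real \<Rightarrow> real \<Rightarrow> real \<Rightarrow> real" where
  "G1 dphi p r u = dphi (cc p r u) * (- p * sin u - r * cos u)"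
definition G2 :: "(real \<Rightarrow> real) \<Rightarrow> (real \<Rightarrow> real) \<Rightarrow> real \<Rightarrow> real \<Rightarrow> real \<Rightarrow> real" where
  "G2 dphi ddphi p r u = ddphi (cc p r u) * (- p * sin u - r * cos u)^2 + dphi (cc p r u) * (- p * cos u + r * sin u)"

lemma cc_range:
  assumes "p^2 + r^2 = 1" shows "cc p r u \<in> {-1..1}"
proof -
  have id: "(p * c - r * s)^2 + (p * s + r * c)^2 = (p^2 + r^2) * (s^2 + c^2)" for s c :: real
    by (simp add: power2_eq_square algebra_simps)
  have "(cc p r u)^2 + (p * sin u + r * cos u)^2 = (p^2 + r^2) * ((sin u)^2 + (cos u)^2)"
    unfolding cc_def by (rule id)
  also have "\<dots> = 1" using assms by simp
  finally have "(cc p r u)^2 \<le> 1" by (smt (verit) zero_le_power2)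
  then show ?thesis using abs_le_square_iff[of "cc p r u" 1] by (auto simp: abs_le_iff)
qed

lemma cc_deriv: "(cc p r has_real_derivative (- p * sin u - r * cos u)) (at u)"
  unfolding cc_def by (auto intro!: derivative_eq_intros)

lemma G_deriv:
  assumes C2: "C2_on_interval phi dphi ddphi" and pr: "p^2 + r^2 = 1"
  shows "((\<lambda>u. phi (cc p r u)) has_real_derivative G1 dphi p r u) (at u)"
    and "((\<lambda>u. G1 dphi p r u) has_real_derivative G2 dphi ddphi p r u) (at u)"
proof -
  have d1: "\<forall>y\<in>{-1..1}. (phi has_real_derivative dphi y) (at y within {-1..1})"
   and d2: "\<forall>y\<in>{-1..1}. (dphi has_real_derivative ddphi y) (at y within {-1..1})"
    using C2 unfolding C2_on_interval_def by auto
  have rng: "\<forall>u. cc p r u \<in> {-1..1}" using cc_range[OF pr] by blast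
  show "((\<lambda>u. phi (cc p r u)) has_real_derivative G1 dphi p r u) (at u)"
    unfolding G1_def by (rule chain_within[OF d1 rng cc_deriv])
  have a: "((\<lambda>u. dphi (cc p r u)) has_real_derivative ddphi (cc p r u) * (- p * sin u - r * cos u)) (at u)"
    by (rule chain_within[OF d2 rng cc_deriv])
  have b: "((\<lambda>u. - p * sin u - r * cos u) has_real_derivative (- p * cos u + r * sin u)) (at u)"
    by (auto intro!: derivative_eq_intros)
  show "((\<lambda>u. G1 dphi p r u) has_real_derivative G2 dphi ddphi p r u) (at u)"
    unfolding G1_def[abs_def] G2_def using DERIV_mult[OF a b]
    by (simp add: power2_eq_square algebra_simps)
qed

definition rr :: "real \<times> real \<Rightarrow> real \<times> real \<Rightarrow> real" where
  "rr x y = fst x * snd y - snd x * fst y"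

lemma ip2_rot: "ip2 (rot a x) (rot b y) = cc (ip2 x y) (rr x y) (b - a)"
  unfolding ip2_def rot_def cc_def rr_def by (simp add: cos_diff sin_diff algebra_simps)

lemma pr_unit: assumes "ip2 x x = 1" "ip2 y y = 1" shows "(ip2 x y)^2 + (rr x y)^2 = 1"
proof -
  have "(ip2 x y)^2 + (rr x y)^2 = ip2 x x * ip2 y y"
    unfolding ip2_def rr_def by (simp add: power2_eq_square algebra_simps)
  then show ?thesis using assms by simp
qed

lemma fobj_expX:
  "fobj phi k W (expX Y t) = 1/2 * (\<Sum>i<k. \<Sum>j<k. W i j * phi (cc (ip2 (Y i) (Y j)) (rr (Y i) (Y j)) (t j - t i)))"
  unfolding fobj_def expX_def ip2_rot ..


definition al :: "nat \<Rightarrow> nat \<Rightarrow> nat \<Rightarrow> real" where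
  "al a i j = (if j = a then 1 else 0) - (if i = a then 1 else 0)"

lemma t_diff1: "(if j = a then s else 0) - (if i = a then s else (0::real)) = al a i j * s"
  unfolding al_def by auto

lemma t_diff2: "((if j = a then s else 0) + (if j = b then r else 0)) - ((if i = a then s else 0) + (if i = b then r else (0::real)))
   = al a i j * s + al b i j * r"
  unfolding al_def by (auto simp: algebra_simps)

lemma G_comp_deriv:
  assumes C2: "C2_on_interval phi dphi ddphi" and pr: "p^2 + r^2 = 1"
  shows "((\<lambda>s. phi (cc p r (a * s + b))) has_real_derivative G1 dphi p r (a * x + b) * a) (at x)"
    and "((\<lambda>s. G1 dphi p r (a * s + b)) has_real_derivative G2 dphi ddphi p r (a * x + b) * a) (at x)"
proof -
  have l: "((\<lambda>s. a * s + b) has_real_derivative a) (at x)"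
    by (auto intro!: derivative_eq_intros)
  show "((\<lambda>s. phi (cc p r (a * s + b))) has_real_derivative G1 dphi p r (a * x + b) * a) (at x)"
    using DERIV_chain2[OF G_deriv(1)[OF C2 pr] l] .
  show "((\<lambda>s. G1 dphi p r (a * s + b)) has_real_derivative G2 dphi ddphi p r (a * x + b) * a) (at x)"
    using DERIV_chain2[OF G_deriv(2)[OF C2 pr] l] .
qed

lemma rgrad_formula:
  assumes C2: "C2_on_interval phi dphi ddphi" and Y: "on_torus k Y"
  shows "rgrad (fobj phi k W) Y a =
     1/2 * (\<Sum>i<k. \<Sum>j<k. W i j * (G1 dphi (ip2 (Y i) (Y j)) (rr (Y i) (Y j)) 0 * al a i j))"
proof -
  have pr: "(ip2 (Y i) (Y j))^2 + (rr (Y i) (Y j))^2 = 1" if "i < k" "j < k" for i j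
    using pr_unit Y that unfolding on_torus_def by auto
  have f: "(\<lambda>s. fobj phi k W (expX Y (\<lambda>l. if l = a then s else 0))) =
     (\<lambda>s. 1/2 * (\<Sum>i<k. \<Sum>j<k. W i j * phi (cc (ip2 (Y i) (Y j)) (rr (Y i) (Y j)) (al a i j * s + 0))))"
    unfolding fobj_expX t_diff1 by simp
  have "((\<lambda>s. 1/2 * (\<Sum>i<k. \<Sum>j<k. W i j * phi (cc (ip2 (Y i) (Y j)) (rr (Y i) (Y j)) (al a i j * s + 0))))
     has_real_derivative 1/2 * (\<Sum>i<k. \<Sum>j<k. W i j * (G1 dphi (ip2 (Y i) (Y j)) (rr (Y i) (Y j)) (al a i j * 0 + 0) * al a i j))) (at 0)"
    by (intro DERIV_cmult DERIV_sum G_comp_deriv(1)[OF C2 pr]) auto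
  then show ?thesis unfolding rgrad_def f by (simp add: DERIV_imp_deriv)
qed

lemma rhess_formula:
  assumes C2: "C2_on_interval phi dphi ddphi" and Y: "on_torus k Y"
  shows "rhess (fobj phi k W) Y a b =
     1/2 * (\<Sum>i<k. \<Sum>j<k. W i j * (G2 dphi ddphi (ip2 (Y i) (Y j)) (rr (Y i) (Y j)) 0 * al a i j * al b i j))"
proof -
  have pr: "(ip2 (Y i) (Y j))^2 + (rr (Y i) (Y j))^2 = 1" if "i < k" "j < k" for i j
    using pr_unit Y that unfolding on_torus_def by auto
  let ?P = "\<lambda>i j. ip2 (Y i) (Y j)" and ?R = "\<lambda>i j. rr (Y i) (Y j)"
  define H1 where "H1 s = 1/2 * (\<Sum>i<k. \<Sum>j<k. W i j * (G1 dphi (?P i j) (?R i j) (al b i j * 0 + al a i j * s) * al b i j))" for s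
  have inner: "deriv (\<lambda>r. fobj phi k W (expX Y (\<lambda>l. (if l = a then s else 0) + (if l = b then r else 0)))) 0 = H1 s" for s
  proof -
    have f: "(\<lambda>r. fobj phi k W (expX Y (\<lambda>l. (if l = a then s else 0) + (if l = b then r else 0)))) =
     (\<lambda>r. 1/2 * (\<Sum>i<k. \<Sum>j<k. W i j * phi (cc (?P i j) (?R i j) (al b i j * r + al a i j * s))))"
      unfolding fobj_expX t_diff2 by (simp add: add.commute)
    have "((\<lambda>r. 1/2 * (\<Sum>i<k. \<Sum>j<k. W i j * phi (cc (?P i j) (?R i j) (al b i j * r + al a i j * s))))
     has_real_derivative H1 s) (at 0)"
      unfolding H1_def by (intro DERIV_cmult DERIV_sum G_comp_deriv(1)[OF C2 pr]) auto
    then show ?thesis unfolding f by (simp add: DERIV_imp_deriv)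
  qed
  have "(H1 has_real_derivative 1/2 * (\<Sum>i<k. \<Sum>j<k. W i j * (G2 dphi ddphi (?P i j) (?R i j) (al a i j * 0 + al b i j * 0) * al a i j * al b i j))) (at 0)"
  proof -
    have e: "H1 = (\<lambda>s. 1/2 * (\<Sum>i<k. \<Sum>j<k. (W i j * al b i j) * G1 dphi (?P i j) (?R i j) (al a i j * s + al b i j * 0)))"
      unfolding H1_def by (auto simp: fun_eq_iff mult_ac add.commute)
    have "((\<lambda>s. 1/2 * (\<Sum>i<k. \<Sum>j<k. (W i j * al b i j) * G1 dphi (?P i j) (?R i j) (al a i j * s + al b i j * 0)))
      has_real_derivative 1/2 * (\<Sum>i<k. \<Sum>j<k. (W i j * al b i j) * (G2 dphi ddphi (?P i j) (?R i j) (al a i j * 0 + al b i j * 0) * al a i j))) (at 0)"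
      by (intro DERIV_cmult DERIV_sum G_comp_deriv(2)[OF C2 pr]) auto
    then show ?thesis unfolding e by (simp add: mult_ac)
  qed
  then show ?thesis unfolding rhess_def inner[abs_def] by (simp add: DERIV_imp_deriv)
qed



lemma sum_lessThan_add: "(\<Sum>i<(a::nat) + b. g i) = (\<Sum>i<a. g i) + (\<Sum>r<b. g (a + r))"
  by (induct b) (auto simp: add.assoc)

lemma sum_blocks:
  fixes q :: "nat \<Rightarrow> nat" and m :: nat
  shows "(\<Sum>i<(\<Sum>l<m. q l). g i) = (\<Sum>a<m. \<Sum>r<q a. g ((\<Sum>l<a. q l) + r))"
  by (induct m) (auto simp: sum_lessThan_add)

lemma block_index:
  fixes q :: "nat \<Rightarrow> nat" and m :: nat
  assumes "i < (\<Sum>l<m. q l)"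
  shows "\<exists>a r. a < m \<and> r < q a \<and> i = (\<Sum>l<a. q l) + r"
  using assms
proof (induct m)
  case 0 then show ?case by simp
next
  case (Suc m)
  show ?case
  proof (cases "i < (\<Sum>l<m. q l)")
    case True then show ?thesis using Suc(1) by (meson less_Suc_eq)
  next
    case False
    then show ?thesis using Suc(2)
      by (intro exI[of _ m] exI[of _ "i - (\<Sum>l<m. q l)"]) auto
  qed
qed

lemma al_sum: assumes "i < k" "j < k" shows "(\<Sum>a<k. al a i j * x a) = x j - x i"
  using assms unfolding al_def by (simp add: left_diff_distrib sum_subtractf if_distrib[of "\<lambda>t. t * _"] sum.delta cong: if_cong)

lemma al_sum_V: assumes "a < k"
  shows "(\<Sum>i<k. \<Sum>j<k. V i j * al a i j) = (\<Sum>i<k. V i a) - (\<Sum>j<k. V a j)"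
proof -
  have "(\<Sum>i<k. \<Sum>j<k. V i j * al a i j) = (\<Sum>i<k. (\<Sum>j<k. if j = a then V i j else 0) - (if i = a then (\<Sum>j<k. V i j) else 0))"
    unfolding al_def by (intro sum.cong refl) (auto simp: right_diff_distrib sum_subtractf if_distrib[of "\<lambda>t. _ * t"] cong: if_cong)
  also have "\<dots> = (\<Sum>i<k. V i a) - (\<Sum>j<k. V a j)"
    using assms by (simp add: sum_subtractf sum.delta')
  finally show ?thesis .
qed

lemma sum4_swap: "(\<Sum>a\<in>A. \<Sum>b\<in>B. \<Sum>i\<in>C. \<Sum>j\<in>D. f a b i j) = (\<Sum>i\<in>C. \<Sum>j\<in>D. \<Sum>a\<in>A. \<Sum>b\<in>B. f a b i j)"
proof -
  have "(\<Sum>a\<in>A. \<Sum>b\<in>B. \<Sum>i\<in>C. \<Sum>j\<in>D. f a b i j) = (\<Sum>a\<in>A. \<Sum>i\<in>C. \<Sum>b\<in>B. \<Sum>j\<in>D. f a b i j)"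
    by (rule sum.cong[OF refl], rule sum.swap)
  also have "\<dots> = (\<Sum>a\<in>A. \<Sum>i\<in>C. \<Sum>j\<in>D. \<Sum>b\<in>B. f a b i j)"
    by (rule sum.cong[OF refl], rule sum.cong[OF refl], rule sum.swap)
  also have "\<dots> = (\<Sum>i\<in>C. \<Sum>a\<in>A. \<Sum>j\<in>D. \<Sum>b\<in>B. f a b i j)"
    by (rule sum.swap)
  also have "\<dots> = (\<Sum>i\<in>C. \<Sum>j\<in>D. \<Sum>a\<in>A. \<Sum>b\<in>B. f a b i j)"
    by (rule sum.cong[OF refl], rule sum.swap)
  finally show ?thesis .
qed

definition Lap :: "nat \<Rightarrow> (nat \<Rightarrow> nat \<Rightarrow> real) \<Rightarrow> real mat" where
  "Lap k V = Matrix.mat k k (\<lambda>(a,b). 1/2 * (\<Sum>i<k. \<Sum>j<k. V i j * al a i j * al b i j))"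

lemma Lap_carrier: "Lap k V \<in> carrier_mat k k" unfolding Lap_def by auto

lemma Lap_sym: "transpose_mat (Lap k V) = Lap k V"
  unfolding Lap_def by (rule eq_matI) (auto simp: mult_ac)

lemma qf_Lap: "qf k (Lap k V) x = 1/2 * (\<Sum>i<k. \<Sum>j<k. V i j * (x j - x i)^2)"
proof -
  have "qf k (Lap k V) x = (\<Sum>a<k. \<Sum>b<k. \<Sum>i<k. \<Sum>j<k. 1/2 * (V i j * (al a i j * x a) * (al b i j * x b)))"
    unfolding qf_def Lap_def by (simp add: sum_distrib_left sum_distrib_right mult_ac)
  also have "\<dots> = (\<Sum>i<k. \<Sum>j<k. \<Sum>a<k. \<Sum>b<k. 1/2 * (V i j * (al a i j * x a) * (al b i j * x b)))"
    by (rule sum4_swap)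
  also have "\<dots> = (\<Sum>i<k. \<Sum>j<k. 1/2 * V i j * ((\<Sum>a<k. al a i j * x a) * (\<Sum>b<k. al b i j * x b)))"
    by (simp add: sum_distrib_left sum_distrib_right sum_product mult_ac)
  also have "\<dots> = (\<Sum>i<k. \<Sum>j<k. 1/2 * V i j * (x j - x i)^2)"
    by (intro sum.cong refl) (simp add: al_sum power2_eq_square)
  finally show ?thesis by (simp add: sum_distrib_left mult_ac)
qed

lemma lap_expand:
  fixes V :: "nat \<Rightarrow> nat \<Rightarrow> real" and x :: "nat \<Rightarrow> real"
  assumes sym: "\<And>i j. V i j = V j i"
  shows "1/2 * (\<Sum>i<k. \<Sum>j<k. V i j * (x j - x i)^2) =
     (\<Sum>i<k. (\<Sum>j<k. V i j) * (x i)^2) - (\<Sum>i<k. \<Sum>j<k. V i j * x i * x j)"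
proof -
  have "(\<Sum>i<k. \<Sum>j<k. V i j * (x j - x i)^2) =
    (\<Sum>i<k. \<Sum>j<k. V i j * (x j)^2) + (\<Sum>i<k. \<Sum>j<k. V i j * (x i)^2) - 2 * (\<Sum>i<k. \<Sum>j<k. V i j * x i * x j)"
    by (simp add: power2_eq_square algebra_simps sum.distrib sum_subtractf sum_distrib_left)
  also have "(\<Sum>i<k. \<Sum>j<k. V i j * (x j)^2) = (\<Sum>i<k. \<Sum>j<k. V i j * (x i)^2)"
    by (subst sum.swap) (simp add: sym)
  finally have e: "(\<Sum>i<k. \<Sum>j<k. V i j * (x j - x i)^2) = 2 * (\<Sum>i<k. \<Sum>j<k. V i j * (x i)^2) - 2 * (\<Sum>i<k. \<Sum>j<k. V i j * x i * x j)"
    by simp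
  have "(\<Sum>i<k. (\<Sum>j<k. V i j) * (x i)^2) = (\<Sum>i<k. \<Sum>j<k. V i j * (x i)^2)"
    by (simp add: sum_distrib_right)
  then show ?thesis using e by linarith
qed



lemma G2_0: "G2 dphi ddphi p r 0 = ddphi p * r^2 - dphi p * p"
  unfolding G2_def cc_def by (simp add: power2_eq_square)

lemma G1_0: "G1 dphi p r 0 = - dphi p * r"
  unfolding G1_def cc_def by simp

definition Gf :: "(real \<Rightarrow> real) \<Rightarrow> (real \<Rightarrow> real) \<Rightarrow> real \<times> real \<Rightarrow> real \<times> real \<Rightarrow> real" where
  "Gf dphi ddphi x y = G2 dphi ddphi (ip2 x y) (rr x y) 0"
definition G1f :: "(real \<Rightarrow> real) \<Rightarrow> real \<times> real \<Rightarrow> real \<times> real \<Rightarrow> real" where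
  "G1f dphi x y = G1 dphi (ip2 x y) (rr x y) 0"

lemma ip2_sym: "ip2 x y = ip2 y x" unfolding ip2_def by simp
lemma rr_anti: "rr y x = - rr x y" unfolding rr_def by simp

lemma Gf_sym: "Gf dphi ddphi x y = Gf dphi ddphi y x"
  unfolding Gf_def G2_0 by (simp add: ip2_sym[of x y] rr_anti[of x y])

lemma G1f_anti: "G1f dphi y x = - G1f dphi x y"
  unfolding G1f_def G1_0 by (simp add: ip2_sym[of x y] rr_anti[of x y])

lemma Gf_self: "ip2 x x = 1 \<Longrightarrow> Gf dphi ddphi x x = - dphi 1"
  unfolding Gf_def G2_0 rr_def by simp

lemma rhess_mat_Lap:
  assumes C2: "C2_on_interval phi dphi ddphi" and Y: "on_torus k Y"
  shows "rhess_mat k (fobj phi k W) Y = Lap k (\<lambda>i j. W i j * Gf dphi ddphi (Y i) (Y j))"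
  unfolding rhess_mat_def Lap_def
  by (rule eq_matI) (auto simp: rhess_formula[OF C2 Y] Gf_def mult_ac)

lemma rgrad_simp:
  assumes C2: "C2_on_interval phi dphi ddphi" and Y: "on_torus k Y" and a: "a < k"
    and Wsym: "\<And>i j. W i j = W j i"
  shows "rgrad (fobj phi k W) Y a = - (\<Sum>j<k. W a j * G1f dphi (Y a) (Y j))"
proof -
  have "rgrad (fobj phi k W) Y a = 1/2 * (\<Sum>i<k. \<Sum>j<k. (W i j * G1f dphi (Y i) (Y j)) * al a i j)"
    unfolding rgrad_formula[OF C2 Y] G1f_def by (simp add: mult_ac)
  also have "\<dots> = 1/2 * ((\<Sum>i<k. W i a * G1f dphi (Y i) (Y a)) - (\<Sum>j<k. W a j * G1f dphi (Y a) (Y j)))"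
    by (subst al_sum_V[OF a]) simp
  also have "(\<Sum>i<k. W i a * G1f dphi (Y i) (Y a)) = - (\<Sum>j<k. W a j * G1f dphi (Y a) (Y j))"
    by (simp add: G1f_anti[of dphi "Y a"] Wsym[of _ a] sum_negf)
  finally show ?thesis by simp
qed


lemma sum_sq_dev:
  fixes v :: "nat \<Rightarrow> real" assumes q: "0 < Q"
  shows "(\<Sum>r<Q. (v r)^2) - (\<Sum>r<Q. v r)^2 / real Q = (\<Sum>r<Q. (v r - (\<Sum>r<Q. v r) / real Q)^2)"
proof -
  define S where "S = (\<Sum>r<Q. v r)"
  define c where "c = S / real Q"
  have e: "(v r - c)^2 = (v r)^2 + (c^2 - 2 * c * v r)" for r by (simp add: power2_diff)
  have "(\<Sum>r<Q. (v r - c)^2) = (\<Sum>r<Q. (v r)^2) + (real Q * c^2 - 2 * c * S)"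
    unfolding e sum.distrib sum_subtractf S_def by (simp add: sum_distrib_left)
  also have "real Q * c^2 - 2 * c * S = - (S^2 / real Q)"
    using q unfolding c_def by (simp add: power2_eq_square field_simps)
  finally show ?thesis unfolding S_def[symmetric] c_def by simp
qed

context
  fixes phi dphi ddphi :: "real \<Rightarrow> real"
    and m n :: nat and q :: "nat \<Rightarrow> nat"
    and X Xt :: "nat \<Rightarrow> real \<times> real"
  assumes C2: "C2_on_interval phi dphi ddphi"
    and dphi1: "dphi 1 > 0"
    and qpos: "\<forall>i<m. q i > 0"
    and n_def: "n = (\<Sum>i<m. q i)"
    and X_torus: "on_torus m X"
    and Xt_def: "\<forall>i<m. \<forall>r<q i. Xt ((\<Sum>l<i. q l) + r) = X i"
begin

definition off where "off a = (\<Sum>l<a. q l)"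
definition Gm where "Gm a b = Gf dphi ddphi (X a) (X b)"
definition mu where "mu a = (\<Sum>b<m. real (q b) * Gm a b)"

lemma sumn: "(\<Sum>i<n. g i) = (\<Sum>a<m. \<Sum>r<q a. g (off a + r))"
  unfolding n_def off_def by (rule sum_blocks)

lemma Xt_off: "a < m \<Longrightarrow> r < q a \<Longrightarrow> Xt (off a + r) = X a"
  using Xt_def unfolding off_def by auto

lemma Xt_torus: "on_torus n Xt"
  unfolding on_torus_def
proof (intro allI impI)
  fix i assume "i < n"
  then obtain a r where "a < m" "r < q a" "i = (\<Sum>l<a. q l) + r" using block_index[where i=i and m=m and q=q] n_def by auto
  then show "ip2 (Xt i) (Xt i) = 1" using Xt_def X_torus unfolding on_torus_def by auto
qed

lemma Gm_sym: "Gm a b = Gm b a" unfolding Gm_def by (rule Gf_sym)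

lemma Gm_self: "a < m \<Longrightarrow> Gm a a = - dphi 1"
  unfolding Gm_def using X_torus Gf_self unfolding on_torus_def by auto

abbreviation "Hm \<equiv> rhess_mat m (fobj phi m (\<lambda>i j. real (q i) * real (q j))) X"
abbreviation "Hn \<equiv> rhess_mat n (fobj phi n (\<lambda>i j. 1)) Xt"

lemma Hm_Lap: "Hm = Lap m (\<lambda>i j. real (q i) * real (q j) * Gm i j)"
  unfolding rhess_mat_Lap[OF C2 X_torus] Gm_def ..

lemma Hn_Lap: "Hn = Lap n (\<lambda>i j. Gf dphi ddphi (Xt i) (Xt j))"
  unfolding rhess_mat_Lap[OF C2 Xt_torus] by simp

lemma qf_m: "qf m Hm x = (\<Sum>a<m. real (q a) * mu a * (x a)^2) - (\<Sum>a<m. \<Sum>b<m. real (q a) * real (q b) * Gm a b * x a * x b)"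
proof -
  have "qf m Hm x = (\<Sum>a<m. (\<Sum>b<m. real (q a) * real (q b) * Gm a b) * (x a)^2) - (\<Sum>a<m. \<Sum>b<m. real (q a) * real (q b) * Gm a b * x a * x b)"
    unfolding Hm_Lap qf_Lap by (rule lap_expand) (simp add: Gm_sym)
  also have "(\<Sum>a<m. (\<Sum>b<m. real (q a) * real (q b) * Gm a b) * (x a)^2) = (\<Sum>a<m. real (q a) * mu a * (x a)^2)"
    unfolding mu_def by (simp add: sum_distrib_left mult_ac)
  finally show ?thesis .
qed

lemma qf_n: "qf n Hn v = (\<Sum>a<m. mu a * (\<Sum>r<q a. (v (off a + r))^2)) -
    (\<Sum>a<m. \<Sum>b<m. Gm a b * (\<Sum>r<q a. v (off a + r)) * (\<Sum>s<q b. v (off b + s)))"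
proof -
  have "qf n Hn v = (\<Sum>i<n. (\<Sum>j<n. Gf dphi ddphi (Xt i) (Xt j)) * (v i)^2) - (\<Sum>i<n. \<Sum>j<n. Gf dphi ddphi (Xt i) (Xt j) * v i * v j)"
    unfolding Hn_Lap qf_Lap by (rule lap_expand) (simp add: Gf_sym)
  also have "(\<Sum>i<n. (\<Sum>j<n. Gf dphi ddphi (Xt i) (Xt j)) * (v i)^2) = (\<Sum>a<m. mu a * (\<Sum>r<q a. (v (off a + r))^2))"
  proof -
    have row: "(\<Sum>j<n. Gf dphi ddphi (X a) (Xt j)) = mu a" if "a < m" for a
      unfolding sumn mu_def Gm_def by (intro sum.cong refl) (simp add: Xt_off)
    show ?thesis unfolding sumn
      by (intro sum.cong refl) (simp add: Xt_off row sum_distrib_left sum_distrib_right mu_def Gm_def)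
  qed
  also have "(\<Sum>i<n. \<Sum>j<n. Gf dphi ddphi (Xt i) (Xt j) * v i * v j) =
     (\<Sum>a<m. \<Sum>b<m. Gm a b * (\<Sum>r<q a. v (off a + r)) * (\<Sum>s<q b. v (off b + s)))"
  proof -
    have "(\<Sum>i<n. \<Sum>j<n. Gf dphi ddphi (Xt i) (Xt j) * v i * v j) =
      (\<Sum>a<m. \<Sum>r<q a. \<Sum>b<m. \<Sum>s<q b. Gm a b * v (off a + r) * v (off b + s))"
      unfolding sumn Gm_def by (intro sum.cong refl) (simp add: Xt_off)
    also have "\<dots> = (\<Sum>a<m. \<Sum>b<m. \<Sum>r<q a. \<Sum>s<q b. Gm a b * v (off a + r) * v (off b + s))"
      by (rule sum.cong[OF refl], rule sum.swap)
    also have "\<dots> = (\<Sum>a<m. \<Sum>b<m. Gm a b * (\<Sum>r<q a. v (off a + r)) * (\<Sum>s<q b. v (off b + s)))"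
      by (simp add: sum_distrib_left sum_distrib_right mult_ac)
    finally show ?thesis .
  qed
  finally show ?thesis .
qed

definition cm where "cm v a = (\<Sum>r<q a. v (off a + r)) / real (q a)"
definition Dv where "Dv v a = (\<Sum>r<q a. (v (off a + r) - cm v a)^2)"

lemma qf_decomp: "qf n Hn v = qf m Hm (cm v) + (\<Sum>a<m. mu a * Dv v a)"
proof -
  have qa: "a < m \<Longrightarrow> real (q a) > 0" for a using qpos by auto
  define S where "S a = (\<Sum>r<q a. v (off a + r))" for a
  define T where "T a = (\<Sum>r<q a. (v (off a + r))^2)" for a
  have t1: "real (q a) * mu a * (cm v a)^2 = mu a * ((S a)^2 / real (q a))" if "a \<in> {..<m}" for a
    using qa[of a] that unfolding cm_def S_def by (simp add: power2_eq_square field_simps)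
  have t2: "real (q a) * real (q b) * Gm a b * cm v a * cm v b = Gm a b * S a * S b"
    if "a \<in> {..<m}" "b \<in> {..<m}" for a b
    using qa[of a] qa[of b] that unfolding cm_def S_def by (simp add: field_simps)
  have "qf m Hm (cm v) = (\<Sum>a<m. mu a * ((S a)^2 / real (q a))) - (\<Sum>a<m. \<Sum>b<m. Gm a b * S a * S b)"
  proof -
    have "(\<Sum>a<m. real (q a) * mu a * (cm v a)^2) = (\<Sum>a<m. mu a * ((S a)^2 / real (q a)))"
      by (rule sum.cong[OF refl]) (rule t1)
    moreover have "(\<Sum>a<m. \<Sum>b<m. real (q a) * real (q b) * Gm a b * cm v a * cm v b) = (\<Sum>a<m. \<Sum>b<m. Gm a b * S a * S b)"
    proof (rule sum.cong[OF refl])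
      fix a assume a: "a \<in> {..<m}"
      show "(\<Sum>b<m. real (q a) * real (q b) * Gm a b * cm v a * cm v b) = (\<Sum>b<m. Gm a b * S a * S b)"
        by (rule sum.cong[OF refl]) (rule t2[OF a])
    qed
    ultimately show ?thesis unfolding qf_m by simp
  qed
  moreover have "(\<Sum>a<m. mu a * Dv v a) = (\<Sum>a<m. mu a * T a) - (\<Sum>a<m. mu a * ((S a)^2 / real (q a)))"
  proof -
    have "mu a * Dv v a = mu a * T a - mu a * ((S a)^2 / real (q a))" if "a \<in> {..<m}" for a
    proof -
      have "Dv v a = T a - (S a)^2 / real (q a)"
        using sum_sq_dev[of "q a" "\<lambda>r. v (off a + r)"] qa[of a] that
        unfolding Dv_def cm_def S_def T_def by simp
      then show ?thesis by (simp add: right_diff_distrib)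
    qed
    then show ?thesis by (simp add: sum_subtractf)
  qed
  ultimately show ?thesis unfolding qf_n S_def[symmetric] T_def[symmetric] by simp
qed

lemma Hm_car: "Hm \<in> carrier_mat m m" unfolding Hm_Lap by (rule Lap_carrier)
lemma Hm_sym: "transpose_mat Hm = Hm" unfolding Hm_Lap by (rule Lap_sym)
lemma Hn_car: "Hn \<in> carrier_mat n n" unfolding Hn_Lap by (rule Lap_carrier)
lemma Hn_sym: "transpose_mat Hn = Hn" unfolding Hn_Lap by (rule Lap_sym)

lemma m_pos: assumes hess: "one_zero_rest_neg m Hm" shows "0 < m"
proof (rule ccontr)
  assume "\<not> 0 < m"
  then have m0: "m = 0" by simp
  obtain ls where ls: "length ls = m - 1" "char_poly Hm = [:0, 1:] * prod_list (map (\<lambda>a. [:- a, 1:]) ls)"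
    using hess unfolding one_zero_rest_neg_def by blast
  have "ls = []" using ls(1) m0 by simp
  then have "degree (char_poly Hm) = 1" using ls(2) by simp
  moreover have "degree (char_poly Hm) = 0" using degree_monic_char_poly[OF Hm_car] m0 by simp
  ultimately show False by simp
qed

lemma qf_m_const: "qf m Hm (\<lambda>_. c) = 0"
  unfolding Hm_Lap qf_Lap by simp

lemma qf_n_const: "qf n Hn (\<lambda>_. c) = 0"
  unfolding Hn_Lap qf_Lap by simp

lemma qf_m_unit: assumes a: "a < m"
  shows "qf m Hm (\<lambda>b. if b = a then 1 else 0) = real (q a) * mu a - real (q a) * real (q a) * Gm a a"
proof -
  have "(\<Sum>b<m. \<Sum>c<m. real (q b) * real (q c) * Gm b c * (if b = a then 1 else 0) * (if c = a then 1 else 0))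
     = (\<Sum>b<m. if b = a then real (q a) * real (q a) * Gm a a else 0)"
    by (intro sum.cong refl) (simp add: if_distrib[of "\<lambda>t. _ * t"] sum.delta cong: if_cong)
  also have "\<dots> = real (q a) * real (q a) * Gm a a" using a by (simp add: sum.delta)
  finally have e2: "(\<Sum>b<m. \<Sum>c<m. real (q b) * real (q c) * Gm b c * (if b = a then 1 else 0) * (if c = a then 1 else 0)) = real (q a) * real (q a) * Gm a a" .
  have "(\<Sum>b<m. real (q b) * mu b * (if b = a then 1 else 0)^2) = (\<Sum>b<m. if b = a then real (q a) * mu a else 0)"
    by (intro sum.cong refl) auto
  also have "\<dots> = real (q a) * mu a" using a by simp
  finally have e1: "(\<Sum>b<m. real (q b) * mu b * (if b = a then 1 else 0)^2) = real (q a) * mu a" .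
  show ?thesis unfolding qf_m e1 e2 ..
qed

lemma main_hess: assumes hess: "one_zero_rest_neg m Hm" shows "one_zero_rest_neg n Hn"
proof -
  have mpos: "0 < m" by (rule m_pos[OF hess])
  have qa: "a < m \<Longrightarrow> real (q a) > 0" for a using qpos by auto
  from char_to_qf[OF Hm_car Hm_sym hess[unfolded one_zero_rest_neg_def]]
  obtain z where nsdm: "\<forall>x. qf m Hm x \<le> 0" and zm: "\<forall>x. qf m Hm x = 0 \<longrightarrow> (\<exists>c. \<forall>i<m. x i = c * z i)"
    by blast
  obtain c1 where c1: "\<forall>i<m. (1::real) = c1 * z i" using zm qf_m_const[of 1] by blast
  have c1nz: "c1 \<noteq> 0" using c1 mpos by force
  have kerm: "\<exists>\<alpha>. \<forall>a<m. x a = \<alpha>" if q0x: "qf m Hm x = 0" for x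
  proof -
    obtain c where c: "\<forall>i<m. x i = c * z i" using zm q0x by blast
    have "x a = c / c1" if "a < m" for a
    proof -
      have "z a = 1 / c1" using c1 that c1nz by (metis divide_eq_eq mult.commute)
      then show ?thesis using c that by simp
    qed
    then show ?thesis by blast
  qed
  have mu_neg: "mu a < 0" if a: "a < m" for a
  proof -
    have "qf m Hm (\<lambda>b. if b = a then 1 else 0) \<le> 0" using nsdm by blast
    then have "real (q a) * mu a \<le> real (q a) * real (q a) * Gm a a" unfolding qf_m_unit[OF a] by simp
    also have "\<dots> < 0" using Gm_self[OF a] dphi1 qa[OF a] by simp
    finally show ?thesis using qa[OF a] by (simp add: mult_less_0_iff)
  qed
  have Dv_nn: "Dv v a \<ge> 0" for v a unfolding Dv_def by (rule sum_nonneg) simp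
  have B_le: "(\<Sum>a<m. mu a * Dv v a) \<le> 0" for v
    by (rule sum_nonpos) (use mu_neg Dv_nn in \<open>auto intro: mult_nonpos_nonneg less_imp_le\<close>)
  have nsdn: "\<forall>v. qf n Hn v \<le> 0"
    using qf_decomp nsdm B_le by (smt (verit))
  have kern: "\<exists>c. \<forall>i<n. v i = c * 1" if q0: "qf n Hn v = 0" for v
  proof -
    have A0: "qf m Hm (cm v) = 0" and B0: "(\<Sum>a<m. mu a * Dv v a) = 0"
      using qf_decomp[of v] q0 nsdm B_le[of v] by (smt (verit))+
    obtain \<alpha> where al: "\<forall>a<m. cm v a = \<alpha>" using kerm[OF A0] by blast
    have s1: "(\<Sum>a<m. - (mu a * Dv v a)) = 0" using B0 by (simp add: sum_negf)
    have nn: "\<forall>a\<in>{..<m}. 0 \<le> - (mu a * Dv v a)"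
    proof
      fix a assume "a \<in> {..<m}"
      then have "mu a \<le> 0" using mu_neg by (simp add: less_imp_le)
      then show "0 \<le> - (mu a * Dv v a)" using Dv_nn[of v a] by (simp add: mult_nonpos_nonneg)
    qed
    have zz: "\<forall>a\<in>{..<m}. - (mu a * Dv v a) = 0"
      using sum_nonneg_eq_0_iff[of "{..<m}" "\<lambda>a. - (mu a * Dv v a)"] s1 nn by simp
    have blk: "v (off a + r) = \<alpha>" if ar: "a < m" "r < q a" for a r
    proof -
      have "Dv v a = 0" using bspec[OF zz, of a] ar mu_neg[OF ar(1)] by simp
      then have "\<forall>r\<in>{..<q a}. (v (off a + r) - cm v a)^2 = 0"
        unfolding Dv_def using sum_nonneg_eq_0_iff[of "{..<q a}" "\<lambda>r. (v (off a + r) - cm v a)^2"] by simp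
      then have "v (off a + r) = cm v a" using ar by simp
      then show ?thesis using al ar by simp
    qed
    have "v i = \<alpha> * 1" if iN: "i < n" for i
    proof -
      obtain a r where "a < m" "r < q a" "i = off a + r"
        using block_index[where i=i and m=m and q=q] iN n_def unfolding off_def by auto
      then show ?thesis using blk by simp
    qed
    then show ?thesis by blast
  qed
  have npos: "0 < n" using n_def qpos mpos
    by (metis lessThan_iff member_le_sum finite_lessThan le_zero_eq not_gr_zero zero_le)
  show ?thesis unfolding one_zero_rest_neg_def
    by (rule qf_to_char[OF Hn_car Hn_sym nsdn npos, of "\<lambda>_. 1"]) (use qf_n_const kern in auto)
qed

lemma main_crit:
  assumes crit: "riem_critical m (fobj phi m (\<lambda>i j. real (q i) * real (q j))) X"
  shows "riem_critical n (fobj phi n (\<lambda>i j. 1)) Xt"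
proof -
  have qa: "a < m \<Longrightarrow> real (q a) > 0" for a using qpos by auto
  have zero: "(\<Sum>b<m. real (q b) * G1f dphi (X a) (X b)) = 0" if a: "a < m" for a
  proof -
    have "rgrad (fobj phi m (\<lambda>i j. real (q i) * real (q j))) X a = 0" using crit a unfolding riem_critical_def by blast
    then have "(\<Sum>j<m. real (q a) * real (q j) * G1f dphi (X a) (X j)) = 0"
      using rgrad_simp[OF C2 X_torus a, of "\<lambda>i j. real (q i) * real (q j)"] by simp
    then have "real (q a) * (\<Sum>j<m. real (q j) * G1f dphi (X a) (X j)) = 0"
      by (simp add: sum_distrib_left mult_ac)
    then show ?thesis using qa[OF a] by simp
  qed
  show ?thesis unfolding riem_critical_def
  proof (intro allI impI)
    fix i assume i: "i < n"
    obtain a r where ar: "a < m" "r < q a" "i = off a + r"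
      using block_index[where i=i and m=m and q=q] i n_def unfolding off_def by auto
    have "rgrad (fobj phi n (\<lambda>i j. 1)) Xt i = - (\<Sum>j<n. G1f dphi (Xt i) (Xt j))"
      using rgrad_simp[OF C2 Xt_torus i, of "\<lambda>i j. 1"] by simp
    also have "(\<Sum>j<n. G1f dphi (Xt i) (Xt j)) = (\<Sum>b<m. real (q b) * G1f dphi (X a) (X b))"
      unfolding sumn using ar by (simp add: Xt_off)
    also have "\<dots> = 0" using zero[OF ar(1)] .
    finally show "rgrad (fobj phi n (\<lambda>i j. 1)) Xt i = 0" by simp
  qed
qed

end

theorem mainTheorem14:
  fixes phi dphi ddphi :: "real \<Rightarrow> real"
    and m n :: nat and q :: "nat \<Rightarrow> nat"
    and X Xt :: "nat \<Rightarrow> real \<times> real"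
  assumes C2: "C2_on_interval phi dphi ddphi"
    and dphi1: "dphi 1 > 0"
    and qpos: "\<forall>i<m. q i > 0"
    and n_def: "n = (\<Sum>i<m. q i)"
    and X_torus: "on_torus m X"
    and Xt_def: "\<forall>i<m. \<forall>r<q i. Xt ((\<Sum>l<i. q l) + r) = X i"
    and crit: "riem_critical m (fobj phi m (\<lambda>i j. real (q i) * real (q j))) X"
    and hess: "one_zero_rest_neg m (rhess_mat m (fobj phi m (\<lambda>i j. real (q i) * real (q j))) X)"
  shows "riem_critical n (fobj phi n (\<lambda>i j. 1)) Xt \<and>
         one_zero_rest_neg n (rhess_mat n (fobj phi n (\<lambda>i j. 1)) Xt)"
  using main_crit[OF C2 dphi1 qpos n_def X_torus Xt_def crit]
    main_hess[OF C2 dphi1 qpos n_def X_torus Xt_def hess] by blast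

end
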